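(* Let $f$ be a real Laurent polynomial whose signed support $(\mathcal A_+,\mathcal A_-)$ is full dimensional and nonseparable. If $x_*\in\operatorname{Sing}_{>0}(f)$, then $\det(\operatorname{Hess}(f)(x_* ))>0$.
   Context: A real Laurent polynomial $f(x)=\sum_{a\in\mathcal A_+}c_ax^a-\sum_{b\in\mathcal A_-}c_bx^b$ with disjoint finite $\mathcal A_+,\mathcal A_-\subseteq\mathbb Z^n$ and all $c_a,c_b>0$ has signed support $(\mathcal A_+,\mathcal A_-)$; it is full dimensional if $\dim\operatorname{conv}(\mathcal A_+\cup\mathcal A_-)=n$. $\mathcal F(\mathcal A_+)$ is the common refinement of all regular polyhedral subdivisions of $\mathcal A_+$, $\mathcal F_n(\mathcal A_+)$ its $n$-cells; $(\mathcal A_+,\mathcal A_-)$ is nonseparable if $\mathcal A_-\subseteq\operatorname{relint}\operatorname{conv}(\mathcal A_+)$ and some $D\in\mathcal F_n(\mathcal A_+)$ contains $\mathcal A_-$. $\operatorname{Sing}_{>0}(f)$ is the set of $x\in\mathbb R^n_{>0}$ with $f(x)=x_1\partial_{x_1}f(x)=\dots=x_n\partial_{x_n}f(x)=0$. $\operatorname{Hess}(f)$ is the Hessian matrix of second partial derivatives. *)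

theory Defs
  imports "HOL-Analysis.Analysis"
begin

text \<open>Exponent vectors in Z^n are represented as points of real^'n with integer coordinates.\<close>

definition lattice_pts :: "(real^'n) set \<Rightarrow> bool" where
  "lattice_pts A \<longleftrightarrow> (\<forall>a\<in>A. \<forall>i. a $ i \<in> \<int>)"

definition lmono :: "real^'n \<Rightarrow> real^'n \<Rightarrow> real" where
  "lmono a x = (\<Prod>i\<in>UNIV. (x $ i) powr (a $ i))"

definition signed_laurent :: "(real^'n) set \<Rightarrow> (real^'n) set \<Rightarrow> (real^'n \<Rightarrow> real) \<Rightarrow> real^'n \<Rightarrow> real" where
  "signed_laurent Ap Am c x = (\<Sum>a\<in>Ap. c a * lmono a x) - (\<Sum>b\<in>Am. c b * lmono b x)"

definition partial :: "'n::finite \<Rightarrow> (real^'n \<Rightarrow> real) \<Rightarrow> real^'n \<Rightarrow> real" where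
  "partial i g x = deriv (\<lambda>t. g (x + t *\<^sub>R axis i 1)) 0"

definition hessian :: "(real^'n::finite \<Rightarrow> real) \<Rightarrow> real^'n \<Rightarrow> real^'n^'n" where
  "hessian g x = (\<chi> i j. partial i (partial j g) x)"

definition Sing_pos :: "(real^'n::finite \<Rightarrow> real) \<Rightarrow> (real^'n) set" where
  "Sing_pos g = {x. (\<forall>i. 0 < x $ i) \<and> g x = 0 \<and> (\<forall>i. x $ i * partial i g x = 0)}"

text \<open>Cells (of all dimensions) of the regular polyhedral subdivision of A induced by the
  height function h: projections of the lower faces of the lifted configuration.\<close>
definition reg_cells :: "(real^'n) set \<Rightarrow> (real^'n \<Rightarrow> real) \<Rightarrow> (real^'n) set set" where
  "reg_cells A h = {convex hull {a\<in>A. h a = w \<bullet> a + c} | w c.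
      (\<forall>a\<in>A. w \<bullet> a + c \<le> h a) \<and> (\<exists>a\<in>A. h a = w \<bullet> a + c)}"

definition common_refinement :: "(real^'n) set \<Rightarrow> (real^'n) set set" where
  "common_refinement A = {(\<Inter>h. \<sigma> h) | \<sigma>. (\<forall>h. \<sigma> h \<in> reg_cells A h) \<and> (\<Inter>h. \<sigma> h) \<noteq> {}}"

definition full_cells :: "(real^'n::finite) set \<Rightarrow> (real^'n) set set" where
  "full_cells A = {D \<in> common_refinement A. aff_dim D = int CARD('n)}"

definition nonseparable :: "(real^'n::finite) set \<Rightarrow> (real^'n) set \<Rightarrow> bool" where
  "nonseparable Ap Am \<longleftrightarrow> Am \<subseteq> rel_interior (convex hull Ap) \<and> (\<exists>D\<in>full_cells Ap. Am \<subseteq> D)"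

definition full_dimensional :: "(real^'n::finite) set \<Rightarrow> (real^'n) set \<Rightarrow> bool" where
  "full_dimensional Ap Am \<longleftrightarrow> aff_dim (convex hull (Ap \<union> Am)) = int CARD('n)"

end

theory Submission imports Defs begin
definition lsum :: "'k set \<Rightarrow> ('k \<Rightarrow> real) \<Rightarrow> ('k \<Rightarrow> real^'n) \<Rightarrow> real^'n \<Rightarrow> real" where
  "lsum K d e y = (\<Sum>k\<in>K. d k * lmono (e k) y)"

lemma lmono_line:
  fixes a y :: "real^'n"
  shows "lmono a (y + t *\<^sub>R axis i 1) =
     (y $ i + t) powr (a $ i) * (\<Prod>k\<in>UNIV - {i}. (y $ k) powr (a $ k))"
proof -
  have "lmono a (y + t *\<^sub>R axis i 1) = (\<Prod>k\<in>UNIV. ((y + t *\<^sub>R axis i 1) $ k) powr (a $ k))"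
    by (simp add: lmono_def)
  also have "\<dots> = ((y + t *\<^sub>R axis i 1) $ i) powr (a $ i) *
       (\<Prod>k\<in>UNIV - {i}. ((y + t *\<^sub>R axis i 1) $ k) powr (a $ k))"
    by (rule prod.remove) auto
  also have "(\<Prod>k\<in>UNIV - {i}. ((y + t *\<^sub>R axis i 1) $ k) powr (a $ k)) =
      (\<Prod>k\<in>UNIV - {i}. (y $ k) powr (a $ k))"
    by (rule prod.cong) (auto simp: axis_def)
  finally show ?thesis by (simp add: axis_def)
qed

lemma lmono_minus_axis:
  fixes a y :: "real^'n"
  assumes "\<forall>k. 0 < y $ k"
  shows "lmono (a - axis i 1) y = lmono a y / y $ i"
proof -
  have "lmono (a - axis i 1) y = (\<Prod>k\<in>UNIV. (y $ k) powr (a $ k) / (y $ k) powr (axis i 1 $ k))"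
    unfolding lmono_def
  proof (rule prod.cong)
    fix k assume "k \<in> (UNIV::'n set)"
    have "y $ k \<noteq> 0" using assms by (metis less_irrefl)
    then show "(y $ k) powr ((a - axis i 1) $ k) = (y $ k) powr (a $ k) / (y $ k) powr (axis i 1 $ k)"
      by (simp add: powr_diff)
  qed simp
  also have "\<dots> = lmono a y / (\<Prod>k\<in>UNIV. (y $ k) powr (axis i 1 $ k))"
    by (simp add: lmono_def prod_dividef)
  also have "(\<Prod>k\<in>UNIV. (y $ k) powr (axis i 1 $ k)) = (\<Prod>k\<in>UNIV. if k = i then y $ i else 1)"
  proof (rule prod.cong)
    fix k assume "k \<in> (UNIV::'n set)"
    have "0 < y $ k" using assms by blast
    then show "(y $ k) powr (axis i 1 $ k) = (if k = i then y $ i else 1)"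
      by (auto simp: axis_def)
  qed simp
  also have "\<dots> = y $ i" by (simp add: prod.delta')
  finally show ?thesis .
qed

lemma lmono_pos: "\<forall>k. 0 < y $ k \<Longrightarrow> 0 < lmono a y"
  unfolding lmono_def by (intro prod_pos) (metis powr_gt_zero less_irrefl)

lemma lmono_deriv:
  fixes a y :: "real^'n"
  assumes "\<forall>k. 0 < y $ k"
  shows "((\<lambda>t. lmono a (y + t *\<^sub>R axis i 1)) has_real_derivative a $ i * lmono (a - axis i 1) y) (at 0)"
proof -
  let ?R = "\<Prod>k\<in>UNIV - {i}. (y $ k) powr (a $ k)"
  have d: "((\<lambda>t. (y $ i + t) powr (a $ i)) has_real_derivative (a $ i * (y $ i + 0) powr (a $ i - 1)) * 1) (at 0)"
    by (rule DERIV_chain2[OF has_real_derivative_powr]) (use assms in \<open>auto intro!: derivative_eq_intros\<close>)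
  have "((\<lambda>t. (y $ i + t) powr (a $ i) * ?R) has_real_derivative (a $ i * (y $ i) powr (a $ i - 1)) * ?R) (at 0)"
    using DERIV_cmult_right[OF d, of ?R] by simp
  moreover have "lmono (a - axis i 1) y = (y $ i) powr (a $ i - 1) * ?R"
    using lmono_line[of "a - axis i 1" y 0 i] by (simp add: axis_def)
  ultimately show ?thesis by (simp add: lmono_line mult.assoc)
qed

lemma lsum_deriv:
  fixes y :: "real^'n"
  assumes "finite K" "\<forall>k. 0 < y $ k"
  shows "((\<lambda>t. lsum K d e (y + t *\<^sub>R axis i 1)) has_real_derivative
     lsum K (\<lambda>k. d k * e k $ i) (\<lambda>k. e k - axis i 1) y) (at 0)"
  unfolding lsum_def
  by (rule DERIV_sum) (use lmono_deriv[OF assms(2)] in \<open>auto intro!: DERIV_cmult simp: mult.assoc\<close>)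

lemma partial_lsum:
  fixes y :: "real^'n"
  assumes "finite K" "\<forall>k. 0 < y $ k"
  shows "partial i (lsum K d e) y = lsum K (\<lambda>k. d k * e k $ i) (\<lambda>k. e k - axis i 1) y"
  unfolding partial_def using lsum_deriv[OF assms] by (rule DERIV_imp_deriv)

lemma partial2_lsum:
  fixes x :: "real^'n"
  assumes "finite K" "\<forall>k. 0 < x $ k"
  shows "partial i (partial j (lsum K d e)) x =
    lsum K (\<lambda>k. d k * e k $ j * (e k - axis j 1) $ i) (\<lambda>k. e k - axis j 1 - axis i 1) x"
proof -
  let ?g = "lsum K (\<lambda>k. d k * e k $ j) (\<lambda>k. e k - axis j 1)"
  have "((\<lambda>t. partial j (lsum K d e) (x + t *\<^sub>R axis i 1)) has_real_derivative
     lsum K (\<lambda>k. d k * e k $ j * (e k - axis j 1) $ i) (\<lambda>k. e k - axis j 1 - axis i 1) x) (at 0)"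
  proof (rule has_field_derivative_transform_within_open)
    show "((\<lambda>t. ?g (x + t *\<^sub>R axis i 1)) has_real_derivative
       lsum K (\<lambda>k. d k * e k $ j * (e k - axis j 1) $ i) (\<lambda>k. e k - axis j 1 - axis i 1) x) (at 0)"
      using lsum_deriv[OF assms, of "\<lambda>k. d k * e k $ j" "\<lambda>k. e k - axis j 1" i] by simp
    show "open {- (x $ i)<..}" by simp
    show "0 \<in> {- (x $ i)<..}" using assms by simp
    fix t assume t: "t \<in> {- (x $ i)<..}"
    have "\<forall>k. 0 < (x + t *\<^sub>R axis i 1) $ k"
      using t assms by (auto simp: axis_def)
    from partial_lsum[OF assms(1) this, of j d e]
    show "?g (x + t *\<^sub>R axis i 1) = partial j (lsum K d e) (x + t *\<^sub>R axis i 1)"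
      by simp
  qed
  then show ?thesis unfolding partial_def[of i] by (rule DERIV_imp_deriv)
qed

lemma sum_inner_swap:
  fixes A :: "(real^'n) set" and q :: "real^'n \<Rightarrow> real"
  shows "(\<Sum>a\<in>A. q a * (u \<bullet> a)) = (\<Sum>j\<in>UNIV. u $ j * (\<Sum>a\<in>A. q a * a $ j))"
  by (simp add: inner_vec_def sum_distrib_left mult.left_commute sum.swap[of _ A])

lemma quad_convex_le:
  fixes w u :: "real^'n"
  assumes "y \<in> convex hull S" "\<forall>z\<in>S. (w \<bullet> z)^2 \<le> u \<bullet> z + c"
  shows "(w \<bullet> y)^2 \<le> u \<bullet> y + c"
proof -
  have cv: "convex {z. (w \<bullet> z)^2 \<le> u \<bullet> z + c}"
    unfolding convex_def
  proof (intro allI impI ballI)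
    fix x z :: "real^'n" and s t :: real
    assume hx: "x \<in> {z. (w \<bullet> z)^2 \<le> u \<bullet> z + c}" and hz: "z \<in> {z. (w \<bullet> z)^2 \<le> u \<bullet> z + c}"
      and st: "0 \<le> s" "0 \<le> t" "s + t = 1"
    have x: "(w \<bullet> x)^2 \<le> u \<bullet> x + c" using hx by simp
    have z: "(w \<bullet> z)^2 \<le> u \<bullet> z + c" using hz by simp
    have t: "t = 1 - s" using st(3) by simp
    have e: "(s * (w \<bullet> x) + t * (w \<bullet> z))^2 = s * (w \<bullet> x)^2 + t * (w \<bullet> z)^2 - s * t * (w \<bullet> x - w \<bullet> z)^2"
      unfolding t by (simp add: power2_eq_square algebra_simps)
    have "0 \<le> s * t * (w \<bullet> x - w \<bullet> z)^2" using st by simp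
    then have "(s * (w \<bullet> x) + t * (w \<bullet> z))^2 \<le> s * (u \<bullet> x + c) + t * (u \<bullet> z + c)"
      using e mult_left_mono[OF x st(1)] mult_left_mono[OF z st(2)] by linarith
    also have "\<dots> = s * (u \<bullet> x) + t * (u \<bullet> z) + c"
      unfolding t by (simp add: algebra_simps)
    finally have "(s * (w \<bullet> x) + t * (w \<bullet> z))\<^sup>2 \<le> s * (u \<bullet> x) + t * (u \<bullet> z) + c" .
    then show "s *\<^sub>R x + t *\<^sub>R z \<in> {z. (w \<bullet> z)^2 \<le> u \<bullet> z + c}"
      by (simp add: inner_add_right)
  qed
  have "convex hull S \<subseteq> {z. (w \<bullet> z)^2 \<le> u \<bullet> z + c}"
    by (rule hull_minimal) (use assms(2) cv in auto)
  then show ?thesis using assms(1) by auto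
qed

lemma geo_main:
  fixes Ap Am :: "(real^'n) set" and q :: "real^'n \<Rightarrow> real" and w :: "real^'n"
  assumes fin: "finite Ap" "finite Am" and disj: "Ap \<inter> Am = {}"
    and qpos: "\<forall>a\<in>Ap \<union> Am. 0 < q a"
    and s0: "(\<Sum>a\<in>Ap. q a) = (\<Sum>b\<in>Am. q b)"
    and s1: "\<forall>j. (\<Sum>a\<in>Ap. q a * a $ j) = (\<Sum>b\<in>Am. q b * b $ j)"
    and fd: "full_dimensional Ap Am" and ns: "nonseparable Ap Am"
    and w0: "w \<noteq> 0"
  shows "(\<Sum>b\<in>Am. q b * (w \<bullet> b)^2) < (\<Sum>a\<in>Ap. q a * (w \<bullet> a)^2)"
proof -
  have aff: "(\<Sum>a\<in>Ap. q a * (u \<bullet> a + c)) = (\<Sum>b\<in>Am. q b * (u \<bullet> b + c))" for u c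
  proof -
    have "(\<Sum>a\<in>Ap. q a * (u \<bullet> a + c)) = (\<Sum>a\<in>Ap. q a * (u \<bullet> a)) + c * (\<Sum>a\<in>Ap. q a)"
      by (simp add: algebra_simps sum.distrib sum_distrib_left)
    also have "\<dots> = (\<Sum>b\<in>Am. q b * (u \<bullet> b)) + c * (\<Sum>b\<in>Am. q b)"
      using s0 s1 by (simp add: sum_inner_swap)
    also have "\<dots> = (\<Sum>b\<in>Am. q b * (u \<bullet> b + c))"
      by (simp add: algebra_simps sum.distrib sum_distrib_left)
    finally show ?thesis .
  qed
  define h0 where "h0 = (\<lambda>x::real^'n. (w \<bullet> x)^2)"
  from ns obtain D where D: "D \<in> full_cells Ap" "Am \<subseteq> D" and Amint: "Am \<subseteq> rel_interior (convex hull Ap)"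
    unfolding nonseparable_def by blast
  from D(1) obtain \<sigma> where sig: "D = (\<Inter>h. \<sigma> h)" "\<forall>h. \<sigma> h \<in> reg_cells Ap h"
    unfolding full_cells_def common_refinement_def by blast
  from sig(2) have "\<sigma> h0 \<in> reg_cells Ap h0" by blast
  then obtain u c where uc: "\<sigma> h0 = convex hull {a\<in>Ap. h0 a = u \<bullet> a + c}" "\<forall>a\<in>Ap. u \<bullet> a + c \<le> h0 a"
    unfolding reg_cells_def by blast
  have AmS: "Am \<subseteq> convex hull {a\<in>Ap. h0 a = u \<bullet> a + c}"
    using D(2) sig(1) uc(1) by blast
  have leb: "h0 b \<le> u \<bullet> b + c" if "b \<in> Am" for b
    using quad_convex_le[of b "{a\<in>Ap. h0 a = u \<bullet> a + c}" w u c] AmS that unfolding h0_def by auto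
  have Amne: "Am \<noteq> {}"
  proof
    assume "Am = {}"
    then have "(\<Sum>a\<in>Ap. q a) = 0" using s0 by simp
    then have "Ap = {}" using sum_pos[of Ap q] fin qpos by force
    with \<open>Am = {}\<close> fd show False unfolding full_dimensional_def by simp
  qed
  have key: "(\<Sum>b\<in>Am. q b * h0 b) < (\<Sum>a\<in>Ap. q a * h0 a)"
  proof (cases "\<exists>a\<in>Ap. u \<bullet> a + c < h0 a")
    case True
    have "(\<Sum>b\<in>Am. q b * h0 b) \<le> (\<Sum>b\<in>Am. q b * (u \<bullet> b + c))"
      by (rule sum_mono) (use leb qpos in \<open>auto intro!: mult_left_mono\<close>)
    also have "\<dots> = (\<Sum>a\<in>Ap. q a * (u \<bullet> a + c))" using aff by simp
    also have "\<dots> < (\<Sum>a\<in>Ap. q a * h0 a)"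
      by (rule sum_strict_mono_ex1) (use fin True uc(2) qpos in \<open>auto intro!: mult_left_mono mult_strict_left_mono\<close>)
    finally show ?thesis .
  next
    case False
    then have eq: "\<forall>a\<in>Ap. h0 a = u \<bullet> a + c" using uc(2) by force
    have le_all: "h0 y \<le> u \<bullet> y + c" if "y \<in> convex hull Ap" for y
      using quad_convex_le[of y Ap w u c] that eq unfolding h0_def by auto
    have sub: "Am \<subseteq> convex hull Ap" using Amint rel_interior_subset by blast
    have "convex hull (Ap \<union> Am) = convex hull Ap"
    proof
      show "convex hull (Ap \<union> Am) \<subseteq> convex hull Ap"
        by (rule hull_minimal) (use sub hull_subset[of Ap convex] in \<open>auto simp: convex_convex_hull\<close>)
      show "convex hull Ap \<subseteq> convex hull (Ap \<union> Am)" by (rule hull_mono) auto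
    qed
    then have "aff_dim (convex hull Ap) = int DIM(real^'n)" using fd unfolding full_dimensional_def by simp
    then have "affine hull (convex hull Ap) = UNIV" by (rule aff_dim_eq_full[THEN iffD1])
    then have ri: "rel_interior (convex hull Ap) = interior (convex hull Ap)" by (rule rel_interior_interior)
    have strict: "h0 b < u \<bullet> b + c" if b: "b \<in> Am" for b
    proof -
      have "b \<in> interior (convex hull Ap)" using b Amint ri by blast
      then obtain e where e: "e > 0" "ball b e \<subseteq> convex hull Ap"
        using mem_interior by blast
      define t where "t = e / (2 * norm w)"
      have nw: "norm w > 0" using w0 by simp
      have t0: "t > 0" using e nw unfolding t_def by simp
      have "norm (t *\<^sub>R w) < e" using e nw unfolding t_def by simp
      then have in1: "b + t *\<^sub>R w \<in> convex hull Ap" and in2: "b - t *\<^sub>R w \<in> convex hull Ap"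
        using e(2) by (auto simp: dist_norm)
      have ww: "w \<bullet> w > 0" using w0 by simp
      have 1: "(w \<bullet> b + t * (w \<bullet> w))^2 \<le> u \<bullet> b + t * (u \<bullet> w) + c"
        using le_all[OF in1] unfolding h0_def by (simp add: inner_add_right)
      have 2: "(w \<bullet> b - t * (w \<bullet> w))^2 \<le> u \<bullet> b - t * (u \<bullet> w) + c"
        using le_all[OF in2] unfolding h0_def by (simp add: inner_diff_right)
      have "(w \<bullet> b + t * (w \<bullet> w))^2 + (w \<bullet> b - t * (w \<bullet> w))^2 = 2 * (w \<bullet> b)^2 + 2 * (t * (w \<bullet> w))^2"
        by (simp add: power2_eq_square algebra_simps)
      moreover have "(t * (w \<bullet> w))^2 > 0" using t0 ww by simp
      ultimately show ?thesis using 1 2 unfolding h0_def by linarith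
    qed
    from Amne obtain b0 where b0: "b0 \<in> Am" by blast
    have "(\<Sum>b\<in>Am. q b * h0 b) < (\<Sum>b\<in>Am. q b * (u \<bullet> b + c))"
      by (rule sum_strict_mono_ex1) (use fin b0 strict leb qpos in \<open>auto intro!: mult_left_mono mult_strict_left_mono\<close>)
    also have "\<dots> = (\<Sum>a\<in>Ap. q a * (u \<bullet> a + c))" using aff by simp
    also have "\<dots> = (\<Sum>a\<in>Ap. q a * h0 a)" using eq by simp
    finally show ?thesis .
  qed
  then show ?thesis unfolding h0_def .
qed

lemma pd_det_nz:
  fixes M :: "real^'n^'n"
  assumes "\<And>v. v \<noteq> 0 \<Longrightarrow> v \<bullet> (M *v v) > 0"
  shows "det M \<noteq> 0"
proof -
  have "inj ((*v) M)"
  proof (rule linear_inj_on_iff_eq_0[THEN iffD2])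
    show "linear ((*v) M)" by (simp add: matrix_vector_mul_linear)
    show "\<forall>x\<in>UNIV. M *v x = 0 \<longrightarrow> x = 0" using assms by force
    show "subspace UNIV" by (rule subspace_UNIV)
  qed
  then show ?thesis using det_nz_iff_inj[of "(*v) M"]
    by (simp add: matrix_vector_mul_linear matrix_of_matrix_vector_mul)
qed

lemma continuous_on_det_path:
  fixes A B :: "real^'n^'n"
  shows "continuous_on S (\<lambda>t::real. det (A + t *\<^sub>R B))"
  unfolding det_def
  by (intro continuous_intros)

lemma pd_det_pos:
  fixes M :: "real^'n^'n"
  assumes "\<And>v. v \<noteq> 0 \<Longrightarrow> v \<bullet> (M *v v) > 0"
  shows "det M > 0"
proof (rule ccontr)
  assume "\<not> det M > 0"
  let ?f = "\<lambda>t::real. det (mat 1 + t *\<^sub>R (M - mat 1))"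
  have c: "continuous_on {0..1} ?f" by (rule continuous_on_det_path)
  have f1: "?f 1 = det M" by simp
  have f0: "?f 0 = 1" by simp
  obtain t where t: "0 \<le> t" "t \<le> 1" "?f t = 0"
    using IVT2'[of ?f 1 0 0, OF _ _ _ c] f0 f1 \<open>\<not> det M > 0\<close> by force
  have "det (mat 1 + t *\<^sub>R (M - mat 1)) \<noteq> 0"
  proof (rule pd_det_nz)
    fix v :: "real^'n" assume v: "v \<noteq> 0"
    have "v \<bullet> ((mat 1 + t *\<^sub>R (M - mat 1)) *v v) = (1 - t) * (v \<bullet> v) + t * (v \<bullet> (M *v v))"
      by (simp add: matrix_vector_mult_add_rdistrib matrix_vector_mult_diff_rdistrib
          scaleR_matrix_vector_assoc[symmetric] inner_diff_right inner_add_right algebra_simps)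
    moreover have "v \<bullet> v > 0" using v by simp
    moreover have "v \<bullet> (M *v v) > 0" using assms v by blast
    ultimately show "v \<bullet> ((mat 1 + t *\<^sub>R (M - mat 1)) *v v) > 0"
      using t by (smt (verit) mult_nonneg_nonneg mult_pos_pos)
  qed
  with t show False by simp
qed
theorem lemma4p3:
  fixes Ap Am :: "(real^'n) set" and c :: "real^'n \<Rightarrow> real" and xs :: "real^'n"
  assumes "finite Ap" "finite Am" "Ap \<inter> Am = {}"
    and "lattice_pts Ap" "lattice_pts Am"
    and "\<forall>a\<in>Ap \<union> Am. 0 < c a"
    and "full_dimensional Ap Am"
    and "nonseparable Ap Am"
    and "xs \<in> Sing_pos (signed_laurent Ap Am c)"
  shows "det (hessian (signed_laurent Ap Am c) xs) > 0"
proof -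
  note fin = assms(1,2) and disj = assms(3) and cpos = assms(6)
  define K where "K = Ap \<union> Am"
  define d where "d = (\<lambda>a. (if a \<in> Ap then 1 else -1) * c a)"
  have finK: "finite K" using fin unfolding K_def by simp
  have geq: "signed_laurent Ap Am c = lsum K d (\<lambda>a. a)"
  proof
    fix y
    have "lsum K d (\<lambda>a. a) y = (\<Sum>a\<in>Ap. d a * lmono a y) + (\<Sum>a\<in>Am. d a * lmono a y)"
      unfolding lsum_def K_def by (rule sum.union_disjoint) (use fin disj in auto)
    also have "(\<Sum>a\<in>Ap. d a * lmono a y) = (\<Sum>a\<in>Ap. c a * lmono a y)"
      by (rule sum.cong) (auto simp: d_def)
    also have "(\<Sum>a\<in>Am. d a * lmono a y) = - (\<Sum>a\<in>Am. c a * lmono a y)"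
      unfolding sum_negf[symmetric] by (rule sum.cong) (use disj in \<open>auto simp: d_def\<close>)
    finally show "signed_laurent Ap Am c y = lsum K d (\<lambda>a. a) y"
      unfolding signed_laurent_def by simp
  qed
  let ?x = xs
  have xpos: "\<forall>k. 0 < ?x $ k" and g0: "lsum K d (\<lambda>a. a) ?x = 0"
    and g1: "\<forall>j. ?x $ j * partial j (lsum K d (\<lambda>a. a)) ?x = 0"
    using assms(9) unfolding Sing_pos_def geq by auto
  define p where "p = (\<lambda>a. d a * lmono a ?x)"
  have xnz: "?x $ k \<noteq> 0" for k using xpos by (metis less_irrefl)
  have E0: "(\<Sum>a\<in>K. p a) = 0" using g0 unfolding lsum_def p_def by simp
  have E1: "(\<Sum>a\<in>K. p a * a $ j) = 0" for j
  proof -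
    have "0 = ?x $ j * lsum K (\<lambda>k. d k * k $ j) (\<lambda>k. k - axis j 1) ?x"
      using spec[OF g1, of j] partial_lsum[OF finK xpos, of j d "\<lambda>a. a"] by simp
    also have "\<dots> = (\<Sum>a\<in>K. p a * a $ j)"
      unfolding lsum_def sum_distrib_left
      by (rule sum.cong) (use xnz in \<open>auto simp: lmono_minus_axis[OF xpos] p_def\<close>)
    finally show ?thesis by simp
  qed
  define M where "M = hessian (signed_laurent Ap Am c) ?x"
  have Mij: "M $ i $ j = (\<Sum>a\<in>K. p a * a $ i * a $ j) / (?x $ i * ?x $ j)" for i j
  proof -
    have "M $ i $ j = lsum K (\<lambda>k. d k * k $ j * (k - axis j 1) $ i) (\<lambda>k. k - axis j 1 - axis i 1) ?x"
      unfolding M_def hessian_def geq using partial2_lsum[OF finK xpos] by simp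
    also have "\<dots> = (\<Sum>a\<in>K. p a * a $ j * (a $ i - (if i = j then 1 else 0))) / (?x $ i * ?x $ j)"
      unfolding lsum_def sum_divide_distrib
    proof (rule sum.cong)
      fix a assume "a \<in> K"
      have l: "lmono (a - axis j 1 - axis i 1) ?x = lmono a ?x / (?x $ i * ?x $ j)"
        using lmono_minus_axis[OF xpos, of "a - axis j 1" i] lmono_minus_axis[OF xpos, of a j] xnz
        by (simp add: field_simps)
      have c: "(a - axis j 1) $ i = a $ i - (if i = j then 1 else 0)"
        by (simp add: axis_def)
      show "d a * a $ j * (a - axis j 1) $ i * lmono (a - axis j 1 - axis i 1) ?x =
        p a * a $ j * (a $ i - (if i = j then 1 else 0)) / (?x $ i * ?x $ j)"
        unfolding l c p_def by simp
    qed simp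
    also have "(\<Sum>a\<in>K. p a * a $ j * (a $ i - (if i = j then 1 else 0))) =
        (\<Sum>a\<in>K. p a * a $ i * a $ j) - (if i = j then (\<Sum>a\<in>K. p a * a $ j) else 0)"
      by (simp add: algebra_simps sum_subtractf)
    finally show ?thesis using E1 by simp
  qed
  define q where "q = (\<lambda>a. c a * lmono a ?x)"
  have pq: "p a = (if a \<in> Ap then q a else - q a)" for a
    unfolding p_def q_def d_def by simp
  have sumK: "(\<Sum>a\<in>K. p a * f a) = (\<Sum>a\<in>Ap. q a * f a) - (\<Sum>a\<in>Am. q a * f a)" for f
  proof -
    have "(\<Sum>a\<in>K. p a * f a) = (\<Sum>a\<in>Ap. p a * f a) + (\<Sum>a\<in>Am. p a * f a)"
      unfolding K_def by (rule sum.union_disjoint) (use fin disj in auto)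
    also have "(\<Sum>a\<in>Ap. p a * f a) = (\<Sum>a\<in>Ap. q a * f a)"
      by (rule sum.cong) (auto simp: pq)
    also have "(\<Sum>a\<in>Am. p a * f a) = - (\<Sum>a\<in>Am. q a * f a)"
      unfolding sum_negf[symmetric] by (rule sum.cong) (use disj in \<open>auto simp: pq\<close>)
    finally show ?thesis by simp
  qed
  have qpos: "\<forall>a\<in>Ap \<union> Am. 0 < q a"
    using cpos lmono_pos[OF xpos] unfolding q_def by auto
  have s0: "(\<Sum>a\<in>Ap. q a) = (\<Sum>b\<in>Am. q b)"
    using E0 sumK[of "\<lambda>_. 1"] by simp
  have s1: "\<forall>j. (\<Sum>a\<in>Ap. q a * a $ j) = (\<Sum>b\<in>Am. q b * b $ j)"
    using E1 sumK by (metis eq_iff_diff_eq_0)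
  have "v \<bullet> (M *v v) > 0" if v: "v \<noteq> 0" for v
  proof -
    define w where "w = (\<chi> i. v $ i / ?x $ i)"
    have w0: "w \<noteq> 0"
    proof
      assume "w = 0"
      then have "v $ i = 0" for i
        using xnz[of i] by (simp add: w_def vec_eq_iff) (metis xnz)
      with v show False by (simp add: vec_eq_iff)
    qed
    have "v \<bullet> (M *v v) = (\<Sum>i\<in>UNIV. \<Sum>j\<in>UNIV. \<Sum>a\<in>K. p a * (a $ i * w $ i) * (a $ j * w $ j))"
    proof -
      have "v \<bullet> (M *v v) = (\<Sum>i\<in>UNIV. \<Sum>j\<in>UNIV. v $ i * M $ i $ j * v $ j)"
        by (simp add: inner_vec_def matrix_vector_mult_def sum_distrib_left mult.assoc)
      also have "\<dots> = (\<Sum>i\<in>UNIV. \<Sum>j\<in>UNIV. \<Sum>a\<in>K. p a * (a $ i * w $ i) * (a $ j * w $ j))"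
        by (intro sum.cong refl) (simp add: Mij w_def sum_distrib_left sum_distrib_right sum_divide_distrib mult_ac)
      finally show ?thesis .
    qed
    also have "\<dots> = (\<Sum>a\<in>K. p a * (w \<bullet> a)^2)"
      by (simp add: inner_vec_def power2_eq_square sum_product sum_distrib_left mult.commute mult.left_commute mult.assoc sum.swap[of _ K])
    also have "\<dots> = (\<Sum>a\<in>Ap. q a * (w \<bullet> a)^2) - (\<Sum>a\<in>Am. q a * (w \<bullet> a)^2)"
      by (rule sumK)
    also have "\<dots> > 0"
      using geo_main[OF fin disj qpos s0 s1 assms(7,8) w0] by simp
    finally show ?thesis .
  qed
  then have "det M > 0" by (rule pd_det_pos)
  then show ?thesis unfolding M_def .
qed

end
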